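(* Let $\mathcal H_S,\mathcal H_M$ be finite-dimensional complex Hilbert spaces and let $\Psi=\sum_{t}\mu_t\,\phi_t\otimes\lambda_t$ be a unit vector in $\mathcal H_S\otimes\mathcal H_M$, where the sum is finite, the $\phi_t\in\mathcal H_S$ and $\lambda_t\in\mathcal H_M$ are unit vectors, the $\mu_t$ are nonzero complex numbers, and $\Pr(\phi_t)>0$ for all $t$. (a) If the vectors $\{\lambda_j\}$ are all collinear, then the $\{\phi_j\}$ are indistinguishable relative to $M$. (b) If the vectors $\{\phi_j\}$ are linearly independent and indistinguishable relative to $M$, then the $\{\lambda_j\}$ are all collinear, i.e. $\lambda_j=e^{i\theta_j}\Lambda$ for a single unit vector $\Lambda$ and real phases $\theta_j$.
   Context: For the pure joint state $\Psi$ with $\rho_S=\mathrm{Tr}_M|\Psi\rangle\langle\Psi|$, and unit vectors $\phi\in\mathcal H_S$, $\eta\in\mathcal H_M$: $\Pr(\phi)=\langle\phi|\rho_S|\phi\rangle$, $\Pr(\phi\wedge\eta)=|\langle\phi\otimes\eta|\Psi\rangle|^2$, $\Pr(\eta\mid\phi)=\Pr(\phi\wedge\eta)/\Pr(\phi)$. Values $\{\phi_j\}$ of $S$ are indistinguishable relative to $M$ iff $\Pr(\eta\mid\phi_j)$ is independent of $j$ for every unit vector $\eta\in\mathcal H_M$. *)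

theory Defs
  imports "HOL-Analysis.Analysis"
begin

text \<open>Finite-dimensional complex Hilbert spaces are modelled as complex^'s and complex^'m
  (with 's, 'm finite types); the tensor product H_S (x) H_M is complex^('s::finite \<times> 'm::finite).\<close>

definition cinner :: "complex^'n \<Rightarrow> complex^'n \<Rightarrow> complex" where
  "cinner a b = (\<Sum>i\<in>UNIV. cnj (a $ i) * b $ i)"

definition tensor :: "complex^'s \<Rightarrow> complex^'m \<Rightarrow> complex^('s::finite \<times> 'm::finite)" where
  "tensor \<phi> \<eta> = (\<chi> p. \<phi> $ fst p * \<eta> $ snd p)"

text \<open>Reduced density matrix rho_S = Tr_M |Psi><Psi|.\<close>
definition rhoS :: "complex^('s::finite \<times> 'm::finite) \<Rightarrow> complex^'s^'s" where
  "rhoS \<Psi> = (\<chi> s s'. \<Sum>m\<in>UNIV. \<Psi> $ (s, m) * cnj (\<Psi> $ (s', m)))"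

definition PrS :: "complex^('s::finite \<times> 'm::finite) \<Rightarrow> complex^'s \<Rightarrow> real" where
  "PrS \<Psi> \<phi> = Re (cinner \<phi> (rhoS \<Psi> *v \<phi>))"

definition PrJ :: "complex^('s::finite \<times> 'm::finite) \<Rightarrow> complex^'s \<Rightarrow> complex^'m \<Rightarrow> real" where
  "PrJ \<Psi> \<phi> \<eta> = (cmod (cinner (tensor \<phi> \<eta>) \<Psi>))\<^sup>2"

definition PrCond :: "complex^('s::finite \<times> 'm::finite) \<Rightarrow> complex^'m \<Rightarrow> complex^'s \<Rightarrow> real" where
  "PrCond \<Psi> \<eta> \<phi> = PrJ \<Psi> \<phi> \<eta> / PrS \<Psi> \<phi>"

definition indistinguishable ::
  "complex^('s::finite \<times> 'm::finite) \<Rightarrow> 't set \<Rightarrow> ('t \<Rightarrow> complex^'s) \<Rightarrow> bool" where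
  "indistinguishable \<Psi> T \<phi> \<longleftrightarrow>
     (\<forall>\<eta>::complex^'m. norm \<eta> = 1 \<longrightarrow>
        (\<forall>j\<in>T. \<forall>k\<in>T. PrCond \<Psi> \<eta> (\<phi> j) = PrCond \<Psi> \<eta> (\<phi> k)))"

definition lin_indep_family :: "'t set \<Rightarrow> ('t \<Rightarrow> complex^'n) \<Rightarrow> bool" where
  "lin_indep_family T v \<longleftrightarrow>
     (\<forall>c :: 't \<Rightarrow> complex. (\<Sum>t\<in>T. c t *s v t) = 0 \<longrightarrow> (\<forall>t\<in>T. c t = 0))"

definition collinear_family :: "'t set \<Rightarrow> ('t \<Rightarrow> complex^'n) \<Rightarrow> bool" where
  "collinear_family T v \<longleftrightarrow> (\<exists>\<Lambda>. \<forall>t\<in>T. \<exists>c::complex. v t = c *s \<Lambda>)"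

end

theory Submission imports Defs begin

lemma cinner_add_right: "cinner a (b + c) = cinner a b + cinner a c"
  by (simp add: cinner_def distrib_left sum.distrib)
lemma cinner_scale_right: "cinner a (c *s b) = c * cinner a b"
  by (simp add: cinner_def sum_distrib_left algebra_simps)
lemma cinner_scale_left: "cinner (c *s a) b = cnj c * cinner a b"
  by (simp add: cinner_def sum_distrib_left algebra_simps)
lemma cinner_sum_right: "cinner a (sum f A) = (\<Sum>t\<in>A. cinner a (f t))"
  by (induct A rule: infinite_finite_induct) (auto simp: cinner_def distrib_left sum.distrib)
lemma cinner_sum_left: "cinner (sum f A) a = (\<Sum>t\<in>A. cinner (f t) a)"
  by (induct A rule: infinite_finite_induct) (auto simp: cinner_def distrib_right sum.distrib)
lemma cinner_cnj: "cinner b a = cnj (cinner a b)"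
  by (simp add: cinner_def mult.commute)
lemma cinner_zero_left[simp]: "cinner 0 a = 0" by (simp add: cinner_def)
lemma cinner_diff_left: "cinner (a - b) c = cinner a c - cinner b c"
  by (simp add: cinner_def left_diff_distrib sum_subtractf)
lemma cinner_diff_right: "cinner c (a - b) = cinner c a - cinner c b"
  by (simp add: cinner_def right_diff_distrib sum_subtractf)

lemma cinner_self: "cinner x x = of_real ((norm x)\<^sup>2)"
proof -
  have "(norm x)\<^sup>2 = (\<Sum>i\<in>UNIV. (cmod (x $ i))\<^sup>2)"
    by (simp add: norm_vec_def L2_set_def sum_nonneg)
  have "cinner x x = (\<Sum>i\<in>UNIV. of_real ((cmod (x $ i))\<^sup>2))"
    unfolding cinner_def by (rule sum.cong) (simp_all add: complex_norm_square mult.commute del: of_real_power)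
  then show ?thesis
    by (simp add: \<open>(norm x)\<^sup>2 = _\<close> of_real_sum del: of_real_power)
qed

lemma cinner_self_eq0: "cinner x x = 0 \<longleftrightarrow> x = 0"
  by (simp add: cinner_self)

definition vv :: "complex^('s::finite \<times> 'm::finite) \<Rightarrow> complex^'s \<Rightarrow> complex^'m" where
  "vv \<Psi> \<phi> = (\<chi> m. \<Sum>s\<in>UNIV. cnj (\<phi> $ s) * \<Psi> $ (s, m))"

lemma L1: "cinner (tensor \<phi> \<eta>) \<Psi> = cinner \<eta> (vv \<Psi> \<phi>)"
proof -
  have "cinner (tensor \<phi> \<eta>) \<Psi> = (\<Sum>s\<in>UNIV. \<Sum>m\<in>UNIV. cnj (\<phi> $ s) * cnj (\<eta> $ m) * \<Psi> $ (s, m))"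
    unfolding cinner_def tensor_def
    by (simp add: sum.cartesian_product split_def UNIV_Times_UNIV[symmetric] del: UNIV_Times_UNIV)
  also have "\<dots> = (\<Sum>m\<in>UNIV. \<Sum>s\<in>UNIV. cnj (\<eta> $ m) * (cnj (\<phi> $ s) * \<Psi> $ (s, m)))"
    by (subst sum.swap) (simp add: algebra_simps)
  also have "\<dots> = cinner \<eta> (vv \<Psi> \<phi>)"
    by (simp add: cinner_def vv_def sum_distrib_left)
  finally show ?thesis .
qed

lemma L2c: "cinner \<phi> (rhoS \<Psi> *v \<phi>) = cinner (vv \<Psi> \<phi>) (vv \<Psi> \<phi>)"
proof -
  have "cinner \<phi> (rhoS \<Psi> *v \<phi>) = (\<Sum>s\<in>UNIV. \<Sum>s'\<in>UNIV. \<Sum>m\<in>UNIV. cnj (\<phi> $ s) * \<Psi> $ (s, m) * (cnj (\<Psi> $ (s', m)) * \<phi> $ s'))"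
    unfolding cinner_def rhoS_def matrix_vector_mult_def
    by (simp add: sum_distrib_left sum_distrib_right algebra_simps)
  also have "\<dots> = (\<Sum>s\<in>UNIV. \<Sum>m\<in>UNIV. \<Sum>s'\<in>UNIV. cnj (\<phi> $ s) * \<Psi> $ (s, m) * (cnj (\<Psi> $ (s', m)) * \<phi> $ s'))"
    by (rule sum.cong[OF refl], rule sum.swap)
  also have "\<dots> = (\<Sum>m\<in>UNIV. \<Sum>s\<in>UNIV. \<Sum>s'\<in>UNIV. cnj (\<phi> $ s) * \<Psi> $ (s, m) * (cnj (\<Psi> $ (s', m)) * \<phi> $ s'))"
    by (rule sum.swap)
  also have "\<dots> = cinner (vv \<Psi> \<phi>) (vv \<Psi> \<phi>)"
    unfolding cinner_def vv_def
    by (simp add: sum_distrib_left sum_distrib_right mult.commute)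
  finally show ?thesis .
qed

lemma L2: "PrS \<Psi> \<phi> = (norm (vv \<Psi> \<phi>))\<^sup>2"
  by (simp add: PrS_def L2c cinner_self)

lemma L3:
  assumes "\<Psi> = (\<Sum>t\<in>T. \<mu> t *s tensor (\<phi> t) (lam t))"
  shows "vv \<Psi> x = (\<Sum>t\<in>T. (\<mu> t * cinner x (\<phi> t)) *s lam t)"
proof -
  have "vv \<Psi> x $ m = (\<Sum>t\<in>T. (\<mu> t * cinner x (\<phi> t)) *s lam t) $ m" for m
    unfolding assms vv_def cinner_def tensor_def
    apply (simp add: sum_component sum_distrib_left sum_distrib_right)
    apply (subst sum.swap) apply (simp add: algebra_simps)
    done
  then show ?thesis by (simp add: vec_eq_iff)
qed

lemma norm_cscale: "norm (c *s x) = cmod c * norm (x::complex^'n)"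
proof -
  have "of_real ((norm (c *s x))\<^sup>2) = (of_real ((cmod c * norm x)\<^sup>2) :: complex)"
    unfolding cinner_self[symmetric] cinner_scale_left cinner_scale_right
    by (simp add: cinner_self power_mult_distrib complex_norm_square mult.commute mult.left_commute del: of_real_power)
  then have "(norm (c *s x))\<^sup>2 = (cmod c * norm x)\<^sup>2" using of_real_eq_iff by blast
  then show ?thesis by (simp add: power2_eq_iff_nonneg)
qed

lemma sum_cscale: "(\<Sum>t\<in>A. f t *s x) = (sum f A) *s (x::complex^'n)"
  by (simp add: vec_eq_iff sum_component sum_distrib_right)

lemma PrJ_vv: "PrJ \<Psi> \<phi> \<eta> = (cmod (cinner \<eta> (vv \<Psi> \<phi>)))\<^sup>2"
  by (simp add: PrJ_def L1)

theorem lemmaA1: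
  fixes \<Psi> :: "complex^('s::finite \<times> 'm::finite)"
    and T :: "'t set"
    and \<phi> :: "'t \<Rightarrow> complex^'s"
    and lam :: "'t \<Rightarrow> complex^'m"
    and \<mu> :: "'t \<Rightarrow> complex"
  assumes "finite T"
    and "norm \<Psi> = 1"
    and "\<Psi> = (\<Sum>t\<in>T. \<mu> t *s tensor (\<phi> t) (lam t))"
    and "\<forall>t\<in>T. norm (\<phi> t) = 1"
    and "\<forall>t\<in>T. norm (lam t) = 1"
    and "\<forall>t\<in>T. \<mu> t \<noteq> 0"
    and "\<forall>t\<in>T. PrS \<Psi> (\<phi> t) > 0"
  shows "(collinear_family T lam \<longrightarrow> indistinguishable \<Psi> T \<phi>)
       \<and> (lin_indep_family T \<phi> \<and> indistinguishable \<Psi> T \<phi> \<longrightarrow>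
            (\<exists>\<Lambda>::complex^'m. norm \<Lambda> = 1 \<and>
               (\<forall>t\<in>T. \<exists>\<theta>::real. lam t = exp (\<i> * of_real \<theta>) *s \<Lambda>)))"
proof (intro conjI impI)
  note V = L3[OF assms(3)]
  have PS: "PrS \<Psi> x = (norm (vv \<Psi> x))\<^sup>2" for x by (rule L2)
  show "indistinguishable \<Psi> T \<phi>" if col: "collinear_family T lam"
  proof -
    obtain L where L: "\<forall>t\<in>T. \<exists>c::complex. lam t = c *s L" using col unfolding collinear_family_def by blast
    then obtain c where c: "\<forall>t\<in>T. lam t = c t *s L" by metis
    define a where "a j = (\<Sum>t\<in>T. \<mu> t * cinner (\<phi> j) (\<phi> t) * c t)" for j
    have va: "vv \<Psi> (\<phi> j) = a j *s L" for j
      unfolding V a_def sum_cscale[symmetric]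
      by (rule sum.cong) (simp_all add: c vector_smult_assoc)
    have nz: "a j \<noteq> 0 \<and> norm L \<noteq> 0" if "j \<in> T" for j
      using assms(7) that PS[of "\<phi> j"] va[of j] by (auto simp: norm_cscale)
    have "PrCond \<Psi> \<eta> (\<phi> j) = (cmod (cinner \<eta> L))\<^sup>2 / (norm L)\<^sup>2" if "j \<in> T" for j \<eta>
      using nz[OF that]
      by (simp add: PrCond_def PrJ_vv PS va cinner_scale_right norm_cscale norm_mult power_mult_distrib)
    then show ?thesis unfolding indistinguishable_def by simp
  qed
  show "\<exists>\<Lambda>::complex^'m. norm \<Lambda> = 1 \<and> (\<forall>t\<in>T. \<exists>\<theta>::real. lam t = exp (\<i> * of_real \<theta>) *s \<Lambda>)"
    if H: "lin_indep_family T \<phi> \<and> indistinguishable \<Psi> T \<phi>"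
  proof -
    have "T \<noteq> {}" using assms(2,3) by auto
    then obtain k where k: "k \<in> T" by blast
    define vk where "vk = vv \<Psi> (\<phi> k)"
    have nvk: "norm vk > 0" using assms(7) k PS[of "\<phi> k"] vk_def by auto
    define L where "L = complex_of_real (1 / norm vk) *s vk"
    have nL: "norm L = 1" using nvk by (simp add: L_def norm_cscale norm_divide)
    have vkL: "vk = complex_of_real (norm vk) *s L" using nvk
      by (simp add: L_def vector_smult_assoc)
    have LL: "cinner L L = 1" by (simp add: cinner_self nL)
    have C1: "cinner \<eta> (vv \<Psi> (\<phi> j)) = 0" if "cinner \<eta> L = 0" "j \<in> T" for \<eta> j
    proof (cases "\<eta> = 0")
      case True then show ?thesis by simp
    next
      case False
      define e where "e = complex_of_real (1 / norm \<eta>) *s \<eta>"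
      have ne: "norm e = 1" using False by (simp add: e_def norm_cscale norm_divide)
      have ee: "\<eta> = complex_of_real (norm \<eta>) *s e" using False
        by (simp add: e_def vector_smult_assoc)
      have "cinner e vk = 0" unfolding e_def
        by (subst vkL) (simp add: cinner_scale_left cinner_scale_right that(1))
      then have "PrCond \<Psi> e (\<phi> k) = 0" by (simp add: PrCond_def PrJ_vv vk_def)
      then have "PrCond \<Psi> e (\<phi> j) = 0"
        using H ne k that(2) unfolding indistinguishable_def by metis
      then have "PrJ \<Psi> (\<phi> j) e = 0" 
      proof -
        have "PrS \<Psi> (\<phi> j) \<noteq> 0" using assms(7) that(2) by auto
        then show ?thesis using \<open>PrCond \<Psi> e (\<phi> j) = 0\<close> unfolding PrCond_def by simp
      qed
      then have "cinner e (vv \<Psi> (\<phi> j)) = 0" by (simp add: PrJ_vv)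
      then show ?thesis by (subst ee) (simp add: cinner_scale_left)
    qed
    have C2: "cinner \<eta> (lam t) = 0" if "cinner \<eta> L = 0" "t \<in> T" for \<eta> t
    proof -
      define x where "x = (\<Sum>t\<in>T. (\<mu> t * cinner \<eta> (lam t)) *s \<phi> t)"
      have "cinner (\<phi> j) x = 0" if "j \<in> T" for j
      proof -
        have "cinner (\<phi> j) x = cinner \<eta> (vv \<Psi> (\<phi> j))"
          unfolding x_def V cinner_sum_right cinner_scale_right by (simp add: mult_ac)
        then show ?thesis using C1 \<open>cinner \<eta> L = 0\<close> that by simp
      qed
      then have "cinner x x = 0"
        by (subst (1) x_def) (simp add: cinner_sum_left cinner_scale_left)
      then have "x = 0" by (simp add: cinner_self_eq0)
      then have "(\<Sum>s\<in>T. (\<lambda>s. \<mu> s * cinner \<eta> (lam s)) s *s \<phi> s) = 0"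
        by (simp add: x_def)
      then have "\<mu> t * cinner \<eta> (lam t) = 0"
        using H[THEN conjunct1, unfolded lin_indep_family_def, rule_format, of "\<lambda>s. \<mu> s * cinner \<eta> (lam s)" t] that(2) by simp
      then show ?thesis using assms(6) that(2) by simp
    qed
    have "\<exists>\<theta>::real. lam t = exp (\<i> * of_real \<theta>) *s L" if t: "t \<in> T" for t
    proof -
      define a where "a = cinner L (lam t)"
      define \<eta> where "\<eta> = lam t - a *s L"
      have "cinner \<eta> L = 0"
        unfolding \<eta>_def cinner_diff_left cinner_scale_left LL a_def
        by (simp add: cinner_cnj[of "lam t"])
      then have h1: "cinner \<eta> (lam t) = 0" using C2 t by blast
      have "cinner \<eta> \<eta> = 0"
        by (subst (2) \<eta>_def) (simp add: cinner_diff_right cinner_scale_right h1 \<open>cinner \<eta> L = 0\<close>)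
      then have la: "lam t = a *s L" by (simp add: cinner_self_eq0 \<eta>_def)
      then have "norm (lam t) = cmod a" using nL by (simp add: norm_cscale)
      then have "cmod a = 1" using assms(5) t by simp
      then have "a \<noteq> 0" by auto
      then have "cis (Arg a) = a" using cis_Arg[of a] \<open>cmod a = 1\<close> by (simp add: sgn_div_norm)
      then have "exp (\<i> * complex_of_real (Arg a)) = a" by (simp add: cis_conv_exp)
      then show ?thesis using la by (intro exI[of _ "Arg a"]) simp
    qed
    then show ?thesis using nL by blast
  qed
qed

end
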